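(* Let $Q\ge1$ and $\Omega_Q=\{(x,y)\in\mathbb R^2:\ x>0,\ y>0,\ xy\le Q\}$. Let $\mathcal B(x,y)=128Q^{3/2}(xy)^{1/2}-(xy)^2$ and, for $X_0\in\Omega_Q$, $\mathcal B_{X_0}(X)=\mathcal B(X)-\mathcal B'(X_0)(X-X_0)$, where $\mathcal B'(X_0)$ is the gradient of $\mathcal B$ at $X_0$. Then (1) $0\le\mathcal B(X)\le 128Q^2$ for all $X\in\Omega_Q$; (2) for all $X_0=(x_0,y_0)$, $X=(x,y)$ in $\Omega_Q$, $$\mathcal B_{X_0}(X_0)-\mathcal B_{X_0}(X)\ge c\,|x-x_0|^2\,y\,y_0,$$ where $c$ is an absolute constant. *)

theory Defs
  imports "HOL-Analysis.Analysis"
begin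

definition OmegaQ :: "real \<Rightarrow> (real \<times> real) set" where
  "OmegaQ Q = {(x, y). x > 0 \<and> y > 0 \<and> x * y \<le> Q}"

definition BQ :: "real \<Rightarrow> real \<times> real \<Rightarrow> real" where
  "BQ Q X = 128 * Q powr (3/2) * sqrt (fst X * snd X) - (fst X * snd X)^2"

definition BQ_at :: "real \<Rightarrow> real \<times> real \<Rightarrow> real \<times> real \<Rightarrow> real" where
  "BQ_at Q X0 X = BQ Q X - frechet_derivative (BQ Q) (at X0) (X - X0)"

end

theory Submission
  imports Defs
begin

lemma K: "Q \<ge> 0 \<Longrightarrow> Q powr (3/2) = Q * sqrt Q"
proof -
  assume "Q \<ge> 0"
  have "Q powr (3/2) = Q powr (1 + 1/2)" by simp
  also have "... = Q powr 1 * Q powr (1/2)" by (rule powr_add)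
  finally show ?thesis using \<open>Q \<ge> 0\<close> by (simp add: powr_half_sqrt)
qed

lemma der:
  assumes "fst X0 > 0" "snd X0 > 0"
  shows "(BQ Q has_derivative (\<lambda>h. (64 * Q powr (3/2) / sqrt (fst X0 * snd X0) - 2 * (fst X0 * snd X0)) * (snd X0 * fst h + fst X0 * snd h))) (at X0)"
proof -
  have t: "fst X0 * snd X0 > 0" using assms by simp
  have sp: "sqrt (fst X0 * snd X0) > 0" using t by simp
  have d1: "((\<lambda>X. fst X * snd X) has_derivative (\<lambda>h. fst X0 * snd h + fst h * snd X0)) (at X0)"
    by (intro has_derivative_mult has_derivative_fst has_derivative_snd has_derivative_ident)
  have d2: "((\<lambda>X. sqrt (fst X * snd X)) has_derivative (\<lambda>h. (fst X0 * snd h + fst h * snd X0) * inverse (sqrt (fst X0 * snd X0)) / 2)) (at X0)"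
    using has_derivative_real_sqrt[OF t d1] by simp
  have d3: "((\<lambda>X. (fst X * snd X)^2) has_derivative (\<lambda>h. 2 * (fst X0 * snd h + fst h * snd X0) * (fst X0 * snd X0))) (at X0)"
    using has_derivative_power[OF d1, of 2] by simp
  note d4 = has_derivative_diff[OF has_derivative_mult_right[OF d2, of "128 * Q powr (3/2)"] d3]
  show ?thesis unfolding BQ_def
  proof (rule has_derivative_eq_rhs[OF d4], rule ext)
    fix h :: "real \<times> real"
    define S where "S = sqrt (fst X0 * snd X0)"
    define W where "W = fst X0 * snd h + fst h * snd X0"
    define K where "K = Q powr (3/2)"
    have "128 * K * (W * inverse S / 2) - 2 * W * (fst X0 * snd X0) = (64 * K / S - 2 * (fst X0 * snd X0)) * W"
      by (simp add: field_simps)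
    moreover have Wc: "snd X0 * fst h + fst X0 * snd h = W" by (simp add: W_def algebra_simps)
    ultimately show "128 * Q powr (3/2) * ((fst X0 * snd h + fst h * snd X0) * inverse (sqrt (fst X0 * snd X0)) / 2) -
        2 * (fst X0 * snd h + fst h * snd X0) * (fst X0 * snd X0) =
        (64 * Q powr (3/2) / sqrt (fst X0 * snd X0) - 2 * (fst X0 * snd X0)) * (snd X0 * fst h + fst X0 * snd h)"
      unfolding S_def[symmetric] K_def[symmetric] W_def[symmetric] by simp
  qed
qed
lemma key:
  fixes a b u v G Q :: real
  assumes pos: "a > 0" "b > 0" "u > 0" "v > 0" and ab: "a * b = u * v"
    and sQ: "u^2 \<le> Q" and s0Q: "v^2 \<le> Q" and G: "G \<ge> 62 * Q"
  shows "(a * u - b * v)^2 / 10 \<le> G * (a-b)^2 + u^4 - v^4 - 4 * v^3 * (u - v)"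
proof -
  have h1: "(a * u - b * v)^2 \<le> 2 * (u^2 * (a-b)^2) + 2 * (b^2 * (u-v)^2)"
  proof -
    have "a * u - b * v = (a-b) * u + b * (u-v)" by (simp add: algebra_simps)
    moreover have "((a-b) * u + b * (u-v))^2 \<le> 2 * ((a-b) * u)^2 + 2 * (b * (u-v))^2"
    proof -
      have "\<And>X Y::real. 2*X^2 + 2*Y^2 - (X+Y)^2 = (X-Y)^2" by (simp add: power2_eq_square algebra_simps)
      then have "\<And>X Y::real. (X+Y)^2 \<le> 2*X^2 + 2*Y^2" by (smt (verit) zero_le_power2)
      then show ?thesis .
    qed
    ultimately show ?thesis by (simp add: power_mult_distrib mult.commute)
  qed
  have h2: "u^4 - v^4 - 4 * v^3 * (u - v) = (u^2+2 * u * v+3 * v^2) * (u-v)^2"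
    by (simp add: algebra_simps power2_eq_square power4_eq_xxxx power3_eq_cube)
  have h3: "u^2 * (a-b)^2 \<le> Q * (a-b)^2" using sQ by (intro mult_right_mono) auto
  have Q0: "Q \<ge> 0" using sQ zero_le_power2[of u] by linarith
  have QA0: "Q * (a-b)^2 \<ge> 0" using Q0 by simp
  have C0: "u * v * (u-v)^2 \<ge> 0" using pos by simp
  have E0: "2 * (u * v * (u-v)^2) \<le> (u^2+2 * u * v+3 * v^2) * (u-v)^2"
  proof -
    have "2 * u * v \<le> u^2+2 * u * v+3 * v^2" using pos by (simp add: power2_eq_square)
    then have "2 * u * v * (u-v)^2 \<le> (u^2+2 * u * v+3 * v^2) * (u-v)^2" by (intro mult_right_mono) auto
    then show ?thesis by (simp add: mult.assoc)
  qed
  show ?thesis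
  proof (cases "b \<le> 2 * a")
    case True
    have "b * b \<le> (2 * a) * b" using True pos by (intro mult_right_mono) auto
    hence "b^2 \<le> 2 * (u * v)" unfolding ab[symmetric] by (simp add: power2_eq_square algebra_simps)
    hence "b^2 * (u-v)^2 \<le> 2 * (u * v) * (u-v)^2" by (intro mult_right_mono) auto
    hence "b^2 * (u-v)^2 \<le> 2 * (u * v * (u-v)^2)" by (simp add: mult.assoc)
    moreover have "G * (a-b)^2 \<ge> 62 * Q * (a-b)^2" using G by (intro mult_right_mono) auto
    hence "G * (a-b)^2 \<ge> 62 * (Q * (a-b)^2)" by (simp add: mult.assoc)
    ultimately show ?thesis using h1 h2 h3 E0 QA0 C0 by linarith
  next
    case False
    have "b/2 \<le> b - a" using False by simp
    hence "(b/2)^2 \<le> (b-a)^2" using pos by (intro power_mono) auto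
    hence bb: "b^2 \<le> 4 * (a-b)^2" by (simp add: power2_commute power_divide)
    have ss: "(u-v)^2 \<le> Q"
    proof (cases "u \<ge> v")
      case True
      then have "(u-v)^2 \<le> u^2" using pos by (intro power_mono) auto
      thus ?thesis using sQ by linarith
    next
      case False
      then have "(v-u)^2 \<le> v^2" using pos by (intro power_mono) auto
      thus ?thesis using s0Q by (simp only: power2_commute[of u v])
    qed
    have "b^2 * (u-v)^2 \<le> 4 * (a-b)^2 * Q" using bb ss by (intro mult_mono) auto
    moreover have "4 * (a-b)^2 * Q = 4 * (Q * (a-b)^2)" by (simp add: algebra_simps)
    ultimately have "b^2 * (u-v)^2 \<le> 4 * (Q * (a-b)^2)" by simp
    moreover have "G * (a-b)^2 \<ge> 62 * Q * (a-b)^2" using G by (intro mult_right_mono) auto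
    hence "G * (a-b)^2 \<ge> 62 * (Q * (a-b)^2)" by (simp add: mult.assoc)
    moreover have "(u^2+2 * u * v+3 * v^2) * (u-v)^2 \<ge> 0" using pos by simp
    moreover have "Q * (a-b)^2 \<ge> 0" using Q0 by simp
    ultimately show ?thesis using h1 h2 h3 Q0 by linarith
  qed
qed

lemma alg2:
  fixes p q p0 q0 K Q G :: real
  assumes pos: "p > 0" "q > 0" "p0 > 0" "q0 > 0"
    and Gv: "G * (p0 * q0) = 64 * K - 2 * (p0 * q0)^3" and G: "G \<ge> 62 * Q"
    and sQ: "(p * q)^2 \<le> Q" and s0Q: "(p0 * q0)^2 \<le> Q"
  shows "1/10 * \<bar>p^2 - p0^2\<bar>^2 * q^2 * q0^2 \<le>
     (128 * K * (p0 * q0) - (p0^2 * q0^2)^2) - ((128 * K * (p * q) - (p^2 * q^2)^2) - G * (q0^2 * (p^2 - p0^2) + p0^2 * (q^2 - q0^2)))"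
proof -
  have k: "((p*q0) * (p*q) - (p0*q) * (p0*q0))^2 / 10 \<le> G * ((p*q0) - (p0*q))^2 + (p*q)^4 - (p0*q0)^4 - 4 * (p0*q0)^3 * ((p*q) - (p0*q0))"
    by (rule key) (use pos sQ s0Q G in auto)
  have e1: "1/10 * \<bar>p^2 - p0^2\<bar>^2 * q^2 * q0^2 = ((p*q0) * (p*q) - (p0*q) * (p0*q0))^2 / 10"
    by (simp add: power2_eq_square algebra_simps)
  have e2: "q0^2 * (p^2 - p0^2) + p0^2 * (q^2 - q0^2) = ((p*q0) - (p0*q))^2 + 2 * (p0 * q0) * ((p*q) - (p0*q0))"
    by (simp add: power2_eq_square algebra_simps)
  have e3: "G * (2 * (p0 * q0) * ((p*q) - (p0*q0))) = 2 * (64 * K - 2 * (p0 * q0)^3) * ((p*q) - (p0*q0))"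
  proof -
    have "G * (2 * (p0 * q0) * ((p*q) - (p0*q0))) = 2 * ((p*q) - (p0*q0)) * (G * (p0 * q0))" by (simp add: algebra_simps)
    also have "... = 2 * (64 * K - 2 * (p0 * q0)^3) * ((p*q) - (p0*q0))" unfolding Gv by (simp add: algebra_simps)
    finally show ?thesis .
  qed
  have "(128 * K * (p0 * q0) - (p0^2 * q0^2)^2) - ((128 * K * (p * q) - (p^2 * q^2)^2) - G * (q0^2 * (p^2 - p0^2) + p0^2 * (q^2 - q0^2)))
     = G * ((p*q0) - (p0*q))^2 + (p*q)^4 - (p0*q0)^4 - 4 * (p0*q0)^3 * ((p*q) - (p0*q0))"
    unfolding e2 distrib_left e3 by (simp add: power2_eq_square power4_eq_xxxx power3_eq_cube algebra_simps)
  then show ?thesis using k e1 by simp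
qed

lemma Kform: "Q \<ge> 0 \<Longrightarrow> Q powr (3/2) = sqrt Q ^ 3"
  using K[of Q] by (simp add: power3_eq_cube)

theorem lemma5p3:
  shows "(\<forall>Q::real. Q \<ge> 1 \<longrightarrow> (\<forall>X \<in> OmegaQ Q. 0 \<le> BQ Q X \<and> BQ Q X \<le> 128 * Q^2))
    \<and> (\<exists>c::real. c > 0 \<and> (\<forall>Q::real. Q \<ge> 1 \<longrightarrow>
         (\<forall>X0 \<in> OmegaQ Q. \<forall>X \<in> OmegaQ Q.
            BQ_at Q X0 X0 - BQ_at Q X0 X \<ge> c * \<bar>fst X - fst X0\<bar>^2 * snd X * snd X0)))"
proof (intro conjI allI impI ballI)
  fix Q :: real and X assume Q1: "Q \<ge> 1" and XO: "X \<in> OmegaQ Q"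
  obtain x y where X: "X = (x, y)" "x > 0" "y > 0" "x * y \<le> Q" using XO unfolding OmegaQ_def by auto
  define w where "w = sqrt Q"
  define r where "r = sqrt (x * y)"
  have w0: "w > 0" using Q1 by (simp add: w_def)
  have r0: "r > 0" using X by (simp add: r_def)
  have rw: "r \<le> w" unfolding r_def w_def using X by simp
  have Kw: "Q powr (3/2) = w^3" using Q1 Kform by (simp add: w_def)
  have Qw: "Q = w^2" using Q1 by (simp add: w_def)
  have t: "x * y = r^2" using X by (simp add: r_def)
  have t2: "(x*y)^2 = r^4" unfolding t by (simp flip: power_mult)
  have B: "BQ Q X = 128 * w^3 * r - r^4" unfolding BQ_def X(1) Kw fst_conv snd_conv t2 r_def[symmetric] by simp
  have r3: "r^3 \<le> w^3" using rw r0 by (intro power_mono) auto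
  have "r^4 = r * r^3" by (simp add: power_numeral_reduce)
  also have "... \<le> r * w^3" using r3 r0 by simp
  finally have "r^4 \<le> r * w^3" .
  moreover have "r * w^3 \<le> 128 * w^3 * r" using r0 w0 by simp
  ultimately show "0 \<le> BQ Q X" unfolding B by linarith
  have "128 * w^3 * r \<le> 128 * w^3 * w" using rw w0 by simp
  moreover have "128 * w^3 * w = 128 * Q^2" unfolding Qw by (simp add: power_numeral_reduce)
  moreover have "r^4 \<ge> 0" using r0 by simp
  ultimately show "BQ Q X \<le> 128 * Q^2" unfolding B by linarith
next
  show "\<exists>c::real. c > 0 \<and> (\<forall>Q::real. Q \<ge> 1 \<longrightarrow>
         (\<forall>X0 \<in> OmegaQ Q. \<forall>X \<in> OmegaQ Q.
            BQ_at Q X0 X0 - BQ_at Q X0 X \<ge> c * \<bar>fst X - fst X0\<bar>^2 * snd X * snd X0))"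
  proof (intro exI[of _ "1/10"] conjI allI impI ballI)
    show "(0::real) < 1/10" by simp
  next
    fix Q :: real and X0 X assume Q1: "Q \<ge> 1" and X0O: "X0 \<in> OmegaQ Q" and XO: "X \<in> OmegaQ Q"
    obtain x y where X: "X = (x, y)" "x > 0" "y > 0" "x * y \<le> Q" using XO unfolding OmegaQ_def by auto
    obtain x0 y0 where X0: "X0 = (x0, y0)" "x0 > 0" "y0 > 0" "x0 * y0 \<le> Q" using X0O unfolding OmegaQ_def by auto
    define p where "p = sqrt x"
    define q where "q = sqrt y"
    define p0 where "p0 = sqrt x0"
    define q0 where "q0 = sqrt y0"
    have pos: "p > 0" "q > 0" "p0 > 0" "q0 > 0" using X X0 by (auto simp: p_def q_def p0_def q0_def)
    have xs: "x = p^2" "y = q^2" "x0 = p0^2" "y0 = q0^2" using X X0 by (auto simp: p_def q_def p0_def q0_def)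
    define K where "K = Q powr (3/2)"
    define G where "G = 64 * K / sqrt (x0 * y0) - 2 * (x0 * y0)"
    have sv: "sqrt (x0 * y0) = p0 * q0" using pos by (simp add: xs real_sqrt_mult)
    have su: "sqrt (x * y) = p * q" using pos by (simp add: xs real_sqrt_mult)
    have fd: "frechet_derivative (BQ Q) (at X0) = (\<lambda>h. G * (y0 * fst h + x0 * snd h))"
      using frechet_derivative_at[OF der[of X0 Q]] X0 by (simp add: G_def K_def)
    have Gv: "G * (p0 * q0) = 64 * K - 2 * (p0 * q0)^3"
      unfolding G_def sv using pos by (simp add: xs field_simps power2_eq_square power3_eq_cube)
    have w: "sqrt Q \<ge> p0 * q0" using X0 sv by (metis real_sqrt_le_iff)
    have "K / (p0 * q0) \<ge> Q"
    proof -
      have "K = Q * sqrt Q" using K Q1 by (simp add: K_def)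
      also have "... \<ge> Q * (p0 * q0)" using w Q1 by simp
      finally show ?thesis using pos by (simp add: field_simps)
    qed
    moreover have "64 * K / (p0 * q0) = 64 * (K / (p0 * q0))" by simp
    ultimately have G: "G \<ge> 62 * Q" unfolding G_def sv using X0 by linarith
    have sQ: "(p * q)^2 \<le> Q" using X by (simp add: xs power_mult_distrib)
    have s0Q: "(p0 * q0)^2 \<le> Q" using X0 by (simp add: xs power_mult_distrib)
    note main = alg2[OF pos Gv G sQ s0Q]
    show "BQ_at Q X0 X0 - BQ_at Q X0 X \<ge> 1/10 * \<bar>fst X - fst X0\<bar>^2 * snd X * snd X0"
    proof -
      have e: "BQ_at Q X0 X0 - BQ_at Q X0 X = BQ Q X0 - (BQ Q X - G * (y0 * (x - x0) + x0 * (y - y0)))"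
        unfolding BQ_at_def fd by (simp add: X(1) X0(1))
      have b0: "BQ Q X0 = 128 * K * (p0 * q0) - (p0^2 * q0^2)^2"
        unfolding BQ_def X0(1) fst_conv snd_conv K_def[symmetric] sv by (simp add: xs)
      have b1: "BQ Q X = 128 * K * (p * q) - (p^2 * q^2)^2"
        unfolding BQ_def X(1) fst_conv snd_conv K_def[symmetric] su by (simp add: xs)
      show ?thesis unfolding e b0 b1 using main by (simp add: X(1) X0(1) xs)
    qed
  qed
qed
end
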